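(* Let $X$ be a locale. A posheaf $F$ on $X$ is complete if and only if every $F(u)$ ($u\in\mathcal{O}(X)$) is a complete lattice and every restriction map $F(u)\to F(v)$ ($v\le u$) is surjective and preserves arbitrary joins and arbitrary meets; equivalently, $F$ is a sheaf with values in the category $SCL$ of complete lattices and surjective maps preserving arbitrary sups and arbitrary infs, satisfying condition (POS3).
   Context: Let $X$ be a locale with frame of opens $\mathcal{O}(X)$. A posheaf on $X$ is a sheaf of sets $F$ with (POS1) each $F(u)$ a poset; (POS2) restriction maps $F(u)\to F(v)$, $x\mapsto x|_v$ ($v\le u$), order-preserving; (POS3) if $u=\bigvee_i u_i$ and $s,t\in F(u)$ satisfy $s|_{u_i}\le t|_{u_i}$ for all $i$, then $s\le t$. A point of $F$ is a morphism $p:\hat1\to F$ with $\hat1$ a subsheaf of the terminal sheaf, identified with an element of $F(\mathrm{dom}(p))$ where $\mathrm{dom}(p)$ is the largest open $u$ with $\hat1(u)\ne\emptyset$; points are ordered by $p_1\le p_2$ iff $\mathrm{dom}(p_1)\le\mathrm{dom}(p_2)$ and $p_1\le p_2|_{\mathrm{dom}(p_1)}$. For $u\in\mathcal{O}(X)$, $F^u$ is the restriction of $F$ to $\downarrow u$. A downsheaf is a subsheaf $G$ with each $G(v)$ a down-set of $F(v)$; $\mathbb{D}F(u)$ is the set of downsheaves of $F^u$, ordered by inclusion, with restriction to smaller opens; $\downarrow:F\to\mathbb{D}F$ sends $z\in F(u)$ to the downsheaf $v\mapsto\{y\in F(v)\mid y\le z|_v\}$ ($v\le u$). For order-preserving $\alpha,\beta$,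 $\alpha\dashv\beta$ means $\alpha x\le y\iff x\le\beta y$ for all points. $F$ is complete if $\downarrow:F\to\mathbb{D}F$ has a left adjoint. *)

theory Defs
  imports Main
begin

definition frame_law :: "'a::complete_lattice itself \<Rightarrow> bool" where
  "frame_law _ \<longleftrightarrow> (\<forall>(a::'a) S. inf a (Sup S) = Sup ((\<lambda>s. inf a s) ` S))"

text \<open>A (pre)sheaf is given by its sets of sections F u and restriction maps
  res u v (meaningful for v \<le> u).\<close>

definition presheaf :: "('a::complete_lattice \<Rightarrow> 'b set) \<Rightarrow> ('a \<Rightarrow> 'a \<Rightarrow> 'b \<Rightarrow> 'b) \<Rightarrow> bool" where
  "presheaf F res \<longleftrightarrow>
     (\<forall>u v x. v \<le> u \<and> x \<in> F u \<longrightarrow> res u v x \<in> F v) \<and>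
     (\<forall>u x. x \<in> F u \<longrightarrow> res u u x = x) \<and>
     (\<forall>u v w x. w \<le> v \<and> v \<le> u \<and> x \<in> F u \<longrightarrow> res v w (res u v x) = res u w x)"

definition sheaf :: "('a::complete_lattice \<Rightarrow> 'b set) \<Rightarrow> ('a \<Rightarrow> 'a \<Rightarrow> 'b \<Rightarrow> 'b) \<Rightarrow> bool" where
  "sheaf F res \<longleftrightarrow> presheaf F res \<and>
     (\<forall>U s. (\<forall>v\<in>U. s v \<in> F v) \<and>
            (\<forall>v\<in>U. \<forall>w\<in>U. res v (inf v w) (s v) = res w (inf v w) (s w)) \<longrightarrow>
            (\<exists>!x. x \<in> F (Sup U) \<and> (\<forall>v\<in>U. res (Sup U) v x = s v)))"

definition partial_order_on' :: "'b set \<Rightarrow> ('b \<Rightarrow> 'b \<Rightarrow> bool) \<Rightarrow> bool" where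
  "partial_order_on' A le \<longleftrightarrow>
     (\<forall>x\<in>A. le x x) \<and>
     (\<forall>x\<in>A. \<forall>y\<in>A. le x y \<and> le y x \<longrightarrow> x = y) \<and>
     (\<forall>x\<in>A. \<forall>y\<in>A. \<forall>z\<in>A. le x y \<and> le y z \<longrightarrow> le x z)"

definition posheaf :: "('a::complete_lattice \<Rightarrow> 'b set) \<Rightarrow> ('a \<Rightarrow> 'a \<Rightarrow> 'b \<Rightarrow> 'b)
    \<Rightarrow> ('a \<Rightarrow> 'b \<Rightarrow> 'b \<Rightarrow> bool) \<Rightarrow> bool" where
  "posheaf F res le \<longleftrightarrow> sheaf F res \<and>
     (\<forall>u. partial_order_on' (F u) (le u)) \<and>
     (\<forall>u v x y. v \<le> u \<and> x \<in> F u \<and> y \<in> F u \<and> le u x y \<longrightarrow> le v (res u v x) (res u v y)) \<and>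
     (\<forall>U s t. s \<in> F (Sup U) \<and> t \<in> F (Sup U) \<and>
        (\<forall>v\<in>U. le v (res (Sup U) v s) (res (Sup U) v t)) \<longrightarrow> le (Sup U) s t)"

text \<open>A point is identified with a pair (dom p, x) with x \<in> F (dom p).
  (u1,x1) \<le> (u2,x2) iff u1 \<le> u2 and x1 \<le> x2|u1.\<close>
definition pt_le :: "('a::complete_lattice \<Rightarrow> 'a \<Rightarrow> 'c \<Rightarrow> 'c) \<Rightarrow> ('a \<Rightarrow> 'c \<Rightarrow> 'c \<Rightarrow> bool)
    \<Rightarrow> 'a \<times> 'c \<Rightarrow> 'a \<times> 'c \<Rightarrow> bool" where
  "pt_le res le p q \<longleftrightarrow> fst p \<le> fst q \<and> le (fst p) (snd p) (res (fst q) (fst p) (snd q))"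

text \<open>A downsheaf of F^u, represented as a subsheaf of F (with the same restriction
  maps) supported on the opens below u (empty elsewhere), each G v a down-set of F v.\<close>
definition downsheaf :: "('a::complete_lattice \<Rightarrow> 'b set) \<Rightarrow> ('a \<Rightarrow> 'a \<Rightarrow> 'b \<Rightarrow> 'b)
    \<Rightarrow> ('a \<Rightarrow> 'b \<Rightarrow> 'b \<Rightarrow> bool) \<Rightarrow> 'a \<Rightarrow> ('a \<Rightarrow> 'b set) \<Rightarrow> bool" where
  "downsheaf F res le u G \<longleftrightarrow>
     (\<forall>v. \<not> v \<le> u \<longrightarrow> G v = {}) \<and>
     (\<forall>v. G v \<subseteq> F v) \<and>
     sheaf G res \<and>
     (\<forall>v. \<forall>x\<in>G v. \<forall>y\<in>F v. le v y x \<longrightarrow> y \<in> G v)"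

definition DF :: "('a::complete_lattice \<Rightarrow> 'b set) \<Rightarrow> ('a \<Rightarrow> 'a \<Rightarrow> 'b \<Rightarrow> 'b)
    \<Rightarrow> ('a \<Rightarrow> 'b \<Rightarrow> 'b \<Rightarrow> bool) \<Rightarrow> 'a \<Rightarrow> ('a \<Rightarrow> 'b set) set" where
  "DF F res le u = {G. downsheaf F res le u G}"

definition DRes :: "'a::complete_lattice \<Rightarrow> 'a \<Rightarrow> ('a \<Rightarrow> 'b set) \<Rightarrow> ('a \<Rightarrow> 'b set)" where
  "DRes u v G = (\<lambda>w. if w \<le> v then G w else {})"

definition DLe :: "'a \<Rightarrow> ('a \<Rightarrow> 'b set) \<Rightarrow> ('a \<Rightarrow> 'b set) \<Rightarrow> bool" where
  "DLe u G H \<longleftrightarrow> (\<forall>w. G w \<subseteq> H w)"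

definition down :: "('a::complete_lattice \<Rightarrow> 'b set) \<Rightarrow> ('a \<Rightarrow> 'a \<Rightarrow> 'b \<Rightarrow> 'b)
    \<Rightarrow> ('a \<Rightarrow> 'b \<Rightarrow> 'b \<Rightarrow> bool) \<Rightarrow> 'a \<Rightarrow> 'b \<Rightarrow> ('a \<Rightarrow> 'b set)" where
  "down F res le u z = (\<lambda>v. if v \<le> u then {y \<in> F v. le v y (res u v z)} else {})"

text \<open>F is complete iff \<open>\<down>\<close> has a left adjoint: an order-preserving sheaf morphism
  \<alpha> : \<bbbD>F \<rightarrow> F (natural transformation) with \<alpha> p \<le> q \<longleftrightarrow> p \<le> \<down> q for all
  points p of \<bbbD>F and q of F.\<close>
definition complete_posheaf :: "('a::complete_lattice \<Rightarrow> 'b set) \<Rightarrow> ('a \<Rightarrow> 'a \<Rightarrow> 'b \<Rightarrow> 'b)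
    \<Rightarrow> ('a \<Rightarrow> 'b \<Rightarrow> 'b \<Rightarrow> bool) \<Rightarrow> bool" where
  "complete_posheaf F res le \<longleftrightarrow>
    (\<exists>\<alpha> :: 'a \<Rightarrow> ('a \<Rightarrow> 'b set) \<Rightarrow> 'b.
       (\<forall>u G. G \<in> DF F res le u \<longrightarrow> \<alpha> u G \<in> F u) \<and>
       (\<forall>u v G. v \<le> u \<and> G \<in> DF F res le u \<longrightarrow> res u v (\<alpha> u G) = \<alpha> v (DRes u v G)) \<and>
       (\<forall>u G H. G \<in> DF F res le u \<and> H \<in> DF F res le u \<and> DLe u G H \<longrightarrow> le u (\<alpha> u G) (\<alpha> u H)) \<and>
       (\<forall>u G w y. G \<in> DF F res le u \<and> y \<in> F w \<longrightarrow>
          (pt_le res le (u, \<alpha> u G) (w, y) \<longleftrightarrow>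
           pt_le DRes DLe (u, G) (w, down F res le w y))))"

definition is_lub_in :: "'b set \<Rightarrow> ('b \<Rightarrow> 'b \<Rightarrow> bool) \<Rightarrow> 'b set \<Rightarrow> 'b \<Rightarrow> bool" where
  "is_lub_in A le S x \<longleftrightarrow> x \<in> A \<and> (\<forall>s\<in>S. le s x) \<and> (\<forall>y\<in>A. (\<forall>s\<in>S. le s y) \<longrightarrow> le x y)"

definition is_glb_in :: "'b set \<Rightarrow> ('b \<Rightarrow> 'b \<Rightarrow> bool) \<Rightarrow> 'b set \<Rightarrow> 'b \<Rightarrow> bool" where
  "is_glb_in A le S x \<longleftrightarrow> x \<in> A \<and> (\<forall>s\<in>S. le x s) \<and> (\<forall>y\<in>A. (\<forall>s\<in>S. le y s) \<longrightarrow> le y x)"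

definition complete_lattice_on :: "'b set \<Rightarrow> ('b \<Rightarrow> 'b \<Rightarrow> bool) \<Rightarrow> bool" where
  "complete_lattice_on A le \<longleftrightarrow> partial_order_on' A le \<and>
     (\<forall>S. S \<subseteq> A \<longrightarrow> (\<exists>x. is_lub_in A le S x)) \<and>
     (\<forall>S. S \<subseteq> A \<longrightarrow> (\<exists>x. is_glb_in A le S x))"

end

theory Submission
  imports Defs
begin

lemma lub_unique: "partial_order_on' A le \<Longrightarrow> is_lub_in A le S x \<Longrightarrow> is_lub_in A le S y \<Longrightarrow> x = y"
  unfolding partial_order_on'_def is_lub_in_def by blast
lemma glb_unique: "partial_order_on' A le \<Longrightarrow> is_glb_in A le S x \<Longrightarrow> is_glb_in A le S y \<Longrightarrow> x = y"
  unfolding partial_order_on'_def is_glb_in_def by blast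

definition GS :: "('a::complete_lattice \<Rightarrow> 'b set) \<Rightarrow> ('a \<Rightarrow> 'a \<Rightarrow> 'b \<Rightarrow> 'b) \<Rightarrow> ('a \<Rightarrow> 'b \<Rightarrow> 'b \<Rightarrow> bool) \<Rightarrow> 'a \<Rightarrow> 'b set \<Rightarrow> 'a \<Rightarrow> 'b set" where
  "GS F res le u S = (\<lambda>w. if w \<le> u then {z \<in> F w. \<forall>s\<in>S. le w z (res u w s)} else {})"

definition Gb :: "('a::complete_lattice \<Rightarrow> 'b set) \<Rightarrow> ('a \<Rightarrow> 'a \<Rightarrow> 'b \<Rightarrow> 'b) \<Rightarrow> ('a \<Rightarrow> 'b \<Rightarrow> 'b \<Rightarrow> bool) \<Rightarrow> 'a \<Rightarrow> 'a \<Rightarrow> 'b \<Rightarrow> 'a \<Rightarrow> 'b set" where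
  "Gb F res le u v b = (\<lambda>w. if w \<le> u then {z \<in> F w. le (inf w v) (res w (inf w v) z) (res v (inf w v) b)} else {})"

context
  fixes F :: "'a::complete_lattice \<Rightarrow> 'b set"
    and res :: "'a \<Rightarrow> 'a \<Rightarrow> 'b \<Rightarrow> 'b"
    and le :: "'a \<Rightarrow> 'b \<Rightarrow> 'b \<Rightarrow> bool"
  assumes PH: "posheaf F res le"
begin

lemma PH': "sheaf F res \<and>
     (\<forall>u. partial_order_on' (F u) (le u)) \<and>
     (\<forall>u v x y. v \<le> u \<and> x \<in> F u \<and> y \<in> F u \<and> le u x y \<longrightarrow> le v (res u v x) (res u v y)) \<and>
     (\<forall>U s t. s \<in> F (Sup U) \<and> t \<in> F (Sup U) \<and>
        (\<forall>v\<in>U. le v (res (Sup U) v s) (res (Sup U) v t)) \<longrightarrow> le (Sup U) s t)"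
  using PH unfolding posheaf_def .
lemma sheafF: "sheaf F res" using PH' by (rule conjunct1)
lemma preF: "presheaf F res" using sheafF unfolding sheaf_def by (rule conjunct1)
lemma preF': "(\<forall>u v x. v \<le> u \<and> x \<in> F u \<longrightarrow> res u v x \<in> F v) \<and>
     (\<forall>u x. x \<in> F u \<longrightarrow> res u u x = x) \<and>
     (\<forall>u v w x. w \<le> v \<and> v \<le> u \<and> x \<in> F u \<longrightarrow> res v w (res u v x) = res u w x)"
  using preF unfolding presheaf_def .
lemma res_in: "v \<le> u \<Longrightarrow> x \<in> F u \<Longrightarrow> res u v x \<in> F v"
  using preF' by blast
lemma res_id: "x \<in> F u \<Longrightarrow> res u u x = x"
  using preF' by blast
lemma res_comp: "w \<le> v \<Longrightarrow> v \<le> u \<Longrightarrow> x \<in> F u \<Longrightarrow> res v w (res u v x) = res u w x"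
  using preF' by blast
lemma po: "partial_order_on' (F u) (le u)"
  using PH' by blast
lemma le_refl: "x \<in> F u \<Longrightarrow> le u x x"
  using po unfolding partial_order_on'_def by blast
lemma le_antisym: "x \<in> F u \<Longrightarrow> y \<in> F u \<Longrightarrow> le u x y \<Longrightarrow> le u y x \<Longrightarrow> x = y"
  using po unfolding partial_order_on'_def by blast
lemma le_trans: "x \<in> F u \<Longrightarrow> y \<in> F u \<Longrightarrow> z \<in> F u \<Longrightarrow> le u x y \<Longrightarrow> le u y z \<Longrightarrow> le u x z"
  using po unfolding partial_order_on'_def by blast
lemma le_res: "v \<le> u \<Longrightarrow> x \<in> F u \<Longrightarrow> y \<in> F u \<Longrightarrow> le u x y \<Longrightarrow> le v (res u v x) (res u v y)"
  using PH' by blast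
lemma pos3: "s \<in> F (Sup U) \<Longrightarrow> t \<in> F (Sup U) \<Longrightarrow> (\<And>v. v \<in> U \<Longrightarrow> le v (res (Sup U) v s) (res (Sup U) v t)) \<Longrightarrow> le (Sup U) s t"
  using PH' by blast

lemma SFa: "\<forall>U s. (\<forall>v\<in>U. s v \<in> F v) \<and>
            (\<forall>v\<in>U. \<forall>w\<in>U. res v (inf v w) (s v) = res w (inf v w) (s w)) \<longrightarrow>
            (\<exists>!x. x \<in> F (Sup U) \<and> (\<forall>v\<in>U. res (Sup U) v x = s v))"
  using sheafF unfolding sheaf_def by (rule conjunct2)

lemma glue:
  assumes "\<And>v. v \<in> U \<Longrightarrow> s v \<in> F v"
    "\<And>v w. v \<in> U \<Longrightarrow> w \<in> U \<Longrightarrow> res v (inf v w) (s v) = res w (inf v w) (s w)"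
  shows "\<exists>x. x \<in> F (Sup U) \<and> (\<forall>v\<in>U. res (Sup U) v x = s v)"
proof -
  have "\<exists>!x. x \<in> F (Sup U) \<and> (\<forall>v\<in>U. res (Sup U) v x = s v)"
    using assms by (intro SFa[rule_format]) auto
  then show ?thesis by (rule ex1_implies_ex)
qed

lemma subsheaf:
  assumes sub: "\<And>v. G v \<subseteq> F v"
    and cl: "\<And>u v x. v \<le> u \<Longrightarrow> x \<in> G u \<Longrightarrow> res u v x \<in> G v"
    and gl: "\<And>U s x. (\<forall>v\<in>U. s v \<in> G v) \<Longrightarrow>
        (\<forall>v\<in>U. \<forall>w\<in>U. res v (inf v w) (s v) = res w (inf v w) (s w)) \<Longrightarrow>
        x \<in> F (Sup U) \<Longrightarrow> (\<forall>v\<in>U. res (Sup U) v x = s v) \<Longrightarrow> x \<in> G (Sup U)"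
  shows "sheaf G res"
  unfolding sheaf_def presheaf_def
proof (intro conjI allI impI)
  fix u v x assume "v \<le> u \<and> x \<in> G u" then show "res u v x \<in> G v" using cl by blast
next
  fix u x assume "x \<in> G u" then have "x \<in> F u" using sub by blast
  then show "res u u x = x" by (rule res_id)
next
  fix u v w x assume "w \<le> v \<and> v \<le> u \<and> x \<in> G u"
  then have "x \<in> F u" "w \<le> v" "v \<le> u" using sub by blast+
  then show "res v w (res u v x) = res u w x" using res_comp by blast
next
  fix U s assume A: "(\<forall>v\<in>U. s v \<in> G v) \<and>
            (\<forall>v\<in>U. \<forall>w\<in>U. res v (inf v w) (s v) = res w (inf v w) (s w))"
  have "(\<forall>v\<in>U. s v \<in> F v)" using A sub by auto
  then have E: "\<exists>!x. x \<in> F (Sup U) \<and> (\<forall>v\<in>U. res (Sup U) v x = s v)"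
    using A by (intro SFa[rule_format]) auto
  then obtain x where x: "x \<in> F (Sup U) \<and> (\<forall>v\<in>U. res (Sup U) v x = s v)"
    and un0: "\<And>y. y \<in> F (Sup U) \<and> (\<forall>v\<in>U. res (Sup U) v y = s v) \<Longrightarrow> y = x"
    by (elim ex1E) blast
  have xG: "x \<in> G (Sup U)" using A x by (intro gl[of U s x]) blast+
  show "\<exists>!x. x \<in> G (Sup U) \<and> (\<forall>v\<in>U. res (Sup U) v x = s v)"
  proof (rule ex1I[of _ x])
    show "x \<in> G (Sup U) \<and> (\<forall>v\<in>U. res (Sup U) v x = s v)" using xG x by blast
  next
    fix y assume "y \<in> G (Sup U) \<and> (\<forall>v\<in>U. res (Sup U) v y = s v)"
    then have "y \<in> F (Sup U)" "\<forall>v\<in>U. res (Sup U) v y = s v" using sub by auto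
    then show "y = x" by (intro un0) blast
  qed
qed

lemma GS_DF:
  assumes S: "S \<subseteq> F u"
  shows "GS F res le u S \<in> DF F res le u"
  unfolding DF_def mem_Collect_eq downsheaf_def
proof (intro conjI allI impI ballI)
  fix v assume "\<not> v \<le> u" then show "GS F res le u S v = {}" by (simp add: GS_def)
next
  fix v show "GS F res le u S v \<subseteq> F v" by (auto simp: GS_def)
next
  fix v x y assume x: "x \<in> GS F res le u S v" and y: "y \<in> F v" and le: "le v y x"
  then show "y \<in> GS F res le u S v"
    using S by (auto simp: GS_def split: if_splits intro: le_trans res_in)
next
  show "sheaf (GS F res le u S) res"
  proof (rule subsheaf)
    fix v show "GS F res le u S v \<subseteq> F v" by (auto simp: GS_def)
  next
    fix p q x assume qp: "q \<le> p" and x: "x \<in> GS F res le u S p"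
    then have pu: "p \<le> u" and xF: "x \<in> F p" and xl: "\<forall>s\<in>S. le p x (res u p s)"
      by (auto simp: GS_def split: if_splits)
    have "le q (res p q x) (res u q s)" if "s \<in> S" for s
    proof -
      have "le q (res p q x) (res p q (res u p s))"
        using le_res[OF qp xF res_in[OF pu] xl[rule_format, OF that]] S that by blast
      then show ?thesis using res_comp[OF qp pu] S that by auto
    qed
    then show "res p q x \<in> GS F res le u S q"
      using qp pu res_in[OF qp xF] by (auto simp: GS_def)
  next
    fix U s x
    assume sU: "\<forall>v\<in>U. s v \<in> GS F res le u S v"
      and x: "x \<in> F (Sup U)" and xs: "\<forall>v\<in>U. res (Sup U) v x = s v"
    have vu: "v \<le> u" if "v \<in> U" for v
      using sU that by (auto simp: GS_def split: if_splits)
    then have Uu: "Sup U \<le> u" by (rule Sup_least)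
    have "le (Sup U) x (res u (Sup U) t)" if t: "t \<in> S" for t
    proof (rule pos3[OF x res_in[OF Uu]])
      show "t \<in> F u" using S t by blast
    next
      fix v assume v: "v \<in> U"
      have "res (Sup U) v (res u (Sup U) t) = res u v t"
        using res_comp[OF Sup_upper[OF v] Uu] S t by blast
      moreover have "le v (s v) (res u v t)"
        using sU v vu[OF v] t by (auto simp: GS_def)
      ultimately show "le v (res (Sup U) v x) (res (Sup U) v (res u (Sup U) t))"
        using xs v by simp
    qed
    then show "x \<in> GS F res le u S (Sup U)" using Uu x by (auto simp: GS_def)
  qed
qed

lemma frame_inf_Sup:
  assumes FL: "frame_law TYPE('a)"
  shows "inf (Sup U) (v::'a) = Sup ((\<lambda>p. inf p v) ` U)"
proof -
  have "inf v (Sup U) = Sup ((\<lambda>s. inf v s) ` U)" using FL unfolding frame_law_def by blast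
  moreover have "(\<lambda>s. inf v s) ` U = (\<lambda>p. inf p v) ` U" by (auto simp: inf_commute)
  ultimately show ?thesis by (simp add: inf_commute)
qed

lemma Gb_DF:
  assumes FL: "frame_law TYPE('a)" and vu: "v \<le> u" and b: "b \<in> F v"
  shows "Gb F res le u v b \<in> DF F res le u"
  unfolding DF_def mem_Collect_eq downsheaf_def
proof (intro conjI allI impI ballI)
  fix w assume "\<not> w \<le> u" then show "Gb F res le u v b w = {}" by (simp add: Gb_def)
next
  fix w show "Gb F res le u v b w \<subseteq> F w" by (auto simp: Gb_def)
next
  fix w x y assume x: "x \<in> Gb F res le u v b w" and y: "y \<in> F w" and le: "le w y x"
  then have wu: "w \<le> u" and xF: "x \<in> F w" and xl: "le (inf w v) (res w (inf w v) x) (res v (inf w v) b)"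
    by (auto simp: Gb_def split: if_splits)
  have "le (inf w v) (res w (inf w v) y) (res w (inf w v) x)"
    using le_res[OF inf_le1 y xF le] .
  then have "le (inf w v) (res w (inf w v) y) (res v (inf w v) b)"
    using le_trans[OF res_in[OF inf_le1 y] res_in[OF inf_le1 xF] res_in[OF inf_le2 b]] xl by blast
  then show "y \<in> Gb F res le u v b w" using wu y by (simp add: Gb_def)
next
  show "sheaf (Gb F res le u v b) res"
  proof (rule subsheaf)
    fix w show "Gb F res le u v b w \<subseteq> F w" by (auto simp: Gb_def)
  next
    fix p q x assume qp: "q \<le> p" and x: "x \<in> Gb F res le u v b p"
    then have pu: "p \<le> u" and xF: "x \<in> F p" and xl: "le (inf p v) (res p (inf p v) x) (res v (inf p v) b)"
      by (auto simp: Gb_def split: if_splits)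
    have qv: "inf q v \<le> inf p v" using qp by (rule inf_mono) simp
    have "le (inf q v) (res (inf p v) (inf q v) (res p (inf p v) x)) (res (inf p v) (inf q v) (res v (inf p v) b))"
      using le_res[OF qv res_in[OF inf_le1 xF] res_in[OF inf_le2 b] xl] .
    moreover have "res (inf p v) (inf q v) (res p (inf p v) x) = res q (inf q v) (res p q x)"
      using res_comp[OF qv inf_le1 xF] res_comp[OF inf_le1 qp xF] by simp
    moreover have "res (inf p v) (inf q v) (res v (inf p v) b) = res v (inf q v) b"
      using res_comp[OF qv inf_le2 b] .
    ultimately show "res p q x \<in> Gb F res le u v b q"
      using qp pu res_in[OF qp xF] by (auto simp: Gb_def)
  next
    fix U s x
    assume sU: "\<forall>w\<in>U. s w \<in> Gb F res le u v b w"
      and x: "x \<in> F (Sup U)" and xs: "\<forall>w\<in>U. res (Sup U) w x = s w"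
    have wu: "w \<le> u" if "w \<in> U" for w
      using sU that by (auto simp: Gb_def split: if_splits)
    then have Uu: "Sup U \<le> u" by (rule Sup_least)
    define W where "W = (\<lambda>p. inf p v) ` U"
    have SW: "inf (Sup U) v = Sup W" unfolding W_def by (rule frame_inf_Sup[OF FL])
    have "le (Sup W) (res (Sup U) (Sup W) x) (res v (Sup W) b)"
    proof (rule pos3)
      show "res (Sup U) (Sup W) x \<in> F (Sup W)" using res_in[OF inf_le1 x, of v] SW by simp
      show "res v (Sup W) b \<in> F (Sup W)" using res_in[OF inf_le2 b, of "Sup U"] SW by simp
    next
      fix q assume "q \<in> W"
      then obtain p where p: "p \<in> U" and q: "q = inf p v" unfolding W_def by blast
      have qW: "q \<le> Sup W" using \<open>q \<in> W\<close> by (rule Sup_upper)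
      have WU: "Sup W \<le> Sup U" and Wv: "Sup W \<le> v" using SW[symmetric] by simp_all
      have pU: "p \<le> Sup U" using p by (rule Sup_upper)
      have "res (Sup W) q (res (Sup U) (Sup W) x) = res (Sup U) q x"
        using res_comp[OF qW WU x] .
      also have "\<dots> = res p q (res (Sup U) p x)"
        using res_comp[OF _ pU x, of q] q by simp
      also have "\<dots> = res p q (s p)" using xs p by simp
      finally have e1: "res (Sup W) q (res (Sup U) (Sup W) x) = res p q (s p)" .
      have e2: "res (Sup W) q (res v (Sup W) b) = res v q b"
        using res_comp[OF qW Wv b] .
      have "le (inf p v) (res p (inf p v) (s p)) (res v (inf p v) b)"
        using sU p wu[OF p] by (auto simp: Gb_def)
      then show "le q (res (Sup W) q (res (Sup U) (Sup W) x)) (res (Sup W) q (res v (Sup W) b))"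
        using e1 e2 q by simp
    qed
    then have "le (inf (Sup U) v) (res (Sup U) (inf (Sup U) v) x) (res v (inf (Sup U) v) b)"
      using SW by simp
    then show "x \<in> Gb F res le u v b (Sup U)" using Uu x by (simp add: Gb_def)
  qed
qed

lemma DF_sub: "G \<in> DF F res le u \<Longrightarrow> G w \<subseteq> F w"
  unfolding DF_def downsheaf_def by blast
lemma DF_empty: "G \<in> DF F res le u \<Longrightarrow> \<not> w \<le> u \<Longrightarrow> G w = {}"
  unfolding DF_def downsheaf_def by blast
lemma DF_le: "G \<in> DF F res le u \<Longrightarrow> z \<in> G w \<Longrightarrow> w \<le> u"
  using DF_empty by blast

lemma down_GS: "down F res le u y = GS F res le u {y}"
  by (simp add: down_def GS_def fun_eq_iff)

lemma DRes_GS: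
  assumes vu: "v \<le> u" and S: "S \<subseteq> F u"
  shows "DRes u v (GS F res le u S) = GS F res le v (res u v ` S)"
proof
  fix w show "DRes u v (GS F res le u S) w = GS F res le v (res u v ` S) w"
  proof (cases "w \<le> v")
    case True
    then have wu: "w \<le> u" using vu by simp
    have "\<And>s. s \<in> S \<Longrightarrow> res v w (res u v s) = res u w s" using res_comp[OF True vu] S by blast
    then show ?thesis using True wu by (auto simp: DRes_def GS_def)
  next
    case False then show ?thesis by (simp add: DRes_def GS_def)
  qed
qed

lemma DRes_Gb:
  assumes vu: "v \<le> u" and b: "b \<in> F v"
  shows "DRes u v (Gb F res le u v b) = down F res le v b"
proof
  fix w show "DRes u v (Gb F res le u v b) w = down F res le v b w"
  proof (cases "w \<le> v")
    case True
    then have wu: "w \<le> u" using vu by simp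
    have iw: "inf w v = w" using True by (simp add: inf_absorb1)
    have "\<And>z. z \<in> F w \<Longrightarrow> res w w z = z" by (rule res_id)
    then show ?thesis using True wu iw by (auto simp: DRes_def Gb_def down_def)
  next
    case False then show ?thesis by (simp add: DRes_def Gb_def down_def)
  qed
qed

lemma complete_imp:
  assumes FL: "frame_law TYPE('a)" and C: "complete_posheaf F res le"
  shows "(\<forall>u. complete_lattice_on (F u) (le u)) \<and>
     (\<forall>u v. v \<le> u \<longrightarrow> res u v ` F u = F v) \<and>
     (\<forall>u v S x. v \<le> u \<and> S \<subseteq> F u \<and> is_lub_in (F u) (le u) S x \<longrightarrow>
                 is_lub_in (F v) (le v) (res u v ` S) (res u v x)) \<and>
     (\<forall>u v S x. v \<le> u \<and> S \<subseteq> F u \<and> is_glb_in (F u) (le u) S x \<longrightarrow>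
                 is_glb_in (F v) (le v) (res u v ` S) (res u v x))"
proof -
  obtain \<alpha> :: "'a \<Rightarrow> ('a \<Rightarrow> 'b set) \<Rightarrow> 'b" where
       A1: "\<forall>u G. G \<in> DF F res le u \<longrightarrow> \<alpha> u G \<in> F u" and
       A2: "\<forall>u v G. v \<le> u \<and> G \<in> DF F res le u \<longrightarrow> res u v (\<alpha> u G) = \<alpha> v (DRes u v G)" and
       A4: "\<forall>u G w y. G \<in> DF F res le u \<and> y \<in> F w \<longrightarrow>
          (pt_le res le (u, \<alpha> u G) (w, y) \<longleftrightarrow>
           pt_le DRes DLe (u, G) (w, down F res le w y))"
    using C unfolding complete_posheaf_def by (elim exE conjE) (rule that; assumption)
  have adj: "le u (\<alpha> u G) y \<longleftrightarrow> (\<forall>w. G w \<subseteq> down F res le u y w)"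
    if G: "G \<in> DF F res le u" and y: "y \<in> F u" for u G y
  proof -
    have "DRes u u (down F res le u y) = down F res le u y"
      by (rule ext) (simp add: DRes_def down_def)
    moreover have "res u u y = y" using y by (rule res_id)
    ultimately show ?thesis using A4[rule_format, OF conjI[OF G y]]
      by (simp add: pt_le_def DLe_def)
  qed
  have unit: "le w z (res u w (\<alpha> u G))"
    if G: "G \<in> DF F res le u" and z: "z \<in> G w" for u G w z
  proof -
    have aF: "\<alpha> u G \<in> F u" using A1 G by blast
    have "G w \<subseteq> down F res le u (\<alpha> u G) w" using adj[OF G aF] le_refl[OF aF] by blast
    then show ?thesis using z by (auto simp: down_def split: if_splits)
  qed
  have counit: "le u (\<alpha> u G) y"
    if G: "G \<in> DF F res le u" and y: "y \<in> F u"
      and b: "\<And>w z. z \<in> G w \<Longrightarrow> le w z (res u w y)" for u G y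
  proof -
    have "G w \<subseteq> down F res le u y w" for w
      using DF_sub[OF G, of w] DF_le[OF G] b by (auto simp: down_def)
    then show ?thesis using adj[OF G y] by blast
  qed
  have glbS: "is_glb_in (F u) (le u) S (\<alpha> u (GS F res le u S))" if S: "S \<subseteq> F u" for u S
  proof -
    have G: "GS F res le u S \<in> DF F res le u" using GS_DF[OF S] .
    have aF: "\<alpha> u (GS F res le u S) \<in> F u" using A1 G by blast
    have lb: "le u (\<alpha> u (GS F res le u S)) s" if s: "s \<in> S" for s
    proof (rule counit[OF G])
      show "s \<in> F u" using S s by blast
    next
      fix w z assume "z \<in> GS F res le u S w"
      then show "le w z (res u w s)" using s by (auto simp: GS_def split: if_splits)
    qed
    have gr: "le u y (\<alpha> u (GS F res le u S))" if y: "y \<in> F u" and yl: "\<forall>s\<in>S. le u y s" for y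
    proof -
      have "\<And>s. s \<in> S \<Longrightarrow> res u u s = s" using S res_id by blast
      then have "y \<in> GS F res le u S u" using y yl by (simp add: GS_def)
      then have "le u y (res u u (\<alpha> u (GS F res le u S)))" by (rule unit[OF G])
      then show ?thesis using res_id[OF aF] by simp
    qed
    show ?thesis unfolding is_glb_in_def using aF lb gr by blast
  qed
  have adown: "\<alpha> u (down F res le u y) = y" if y: "y \<in> F u" for u y
  proof -
    have G: "down F res le u y \<in> DF F res le u" unfolding down_GS using y by (intro GS_DF) simp
    have aF: "\<alpha> u (down F res le u y) \<in> F u" using A1 G by blast
    have 1: "le u (\<alpha> u (down F res le u y)) y"
      by (rule counit[OF G y]) (auto simp: down_def split: if_splits)
    have "y \<in> down F res le u y u" using y le_refl[OF y] res_id[OF y] by (simp add: down_def)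
    then have "le u y (res u u (\<alpha> u (down F res le u y)))" by (rule unit[OF G])
    then have 2: "le u y (\<alpha> u (down F res le u y))" using res_id[OF aF] by simp
    show ?thesis using le_antisym[OF aF y 1 2] .
  qed
  have resGb: "res u v (\<alpha> u (Gb F res le u v b)) = b" if vu: "v \<le> u" and b: "b \<in> F v" for u v b
  proof -
    have G: "Gb F res le u v b \<in> DF F res le u" using Gb_DF[OF FL vu b] .
    have "res u v (\<alpha> u (Gb F res le u v b)) = \<alpha> v (DRes u v (Gb F res le u v b))"
      using A2 G vu by blast
    also have "\<dots> = \<alpha> v (down F res le v b)" using DRes_Gb[OF vu b] by simp
    also have "\<dots> = b" using adown[OF b] .
    finally show ?thesis .
  qed
  have CL: "complete_lattice_on (F u) (le u)" for u
    unfolding complete_lattice_on_def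
  proof (intro conjI allI impI)
    show "partial_order_on' (F u) (le u)" by (rule po)
  next
    fix S assume S: "S \<subseteq> F u"
    show "\<exists>x. is_glb_in (F u) (le u) S x" using glbS[OF S] by blast
  next
    fix S assume S: "S \<subseteq> F u"
    define T where "T = {y \<in> F u. \<forall>s\<in>S. le u s y}"
    have T: "T \<subseteq> F u" unfolding T_def by blast
    have g: "is_glb_in (F u) (le u) T (\<alpha> u (GS F res le u T))" using glbS[OF T] .
    have "is_lub_in (F u) (le u) S (\<alpha> u (GS F res le u T))"
      using g S unfolding is_glb_in_def is_lub_in_def T_def by blast
    then show "\<exists>x. is_lub_in (F u) (le u) S x" by blast
  qed
  have SUR: "res u v ` F u = F v" if vu: "v \<le> u" for u v
  proof
    show "res u v ` F u \<subseteq> F v" using res_in[OF vu] by blast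
  next
    show "F v \<subseteq> res u v ` F u"
    proof
      fix b assume b: "b \<in> F v"
      have "\<alpha> u (Gb F res le u v b) \<in> F u" using A1 Gb_DF[OF FL vu b] by blast
      then show "b \<in> res u v ` F u" using resGb[OF vu b] by force
    qed
  qed
  have JOIN: "is_lub_in (F v) (le v) (res u v ` S) (res u v x)"
    if vu: "v \<le> u" and S: "S \<subseteq> F u" and x: "is_lub_in (F u) (le u) S x" for u v S x
  proof -
    have xF: "x \<in> F u" and xub: "\<forall>s\<in>S. le u s x"
      and xl: "\<forall>y\<in>F u. (\<forall>s\<in>S. le u s y) \<longrightarrow> le u x y"
      using x unfolding is_lub_in_def by blast+
    have ub: "\<forall>t\<in>res u v ` S. le v t (res u v x)"
      using le_res[OF vu _ xF] xub S by blast
    have least: "le v (res u v x) b" if b: "b \<in> F v" and bu: "\<forall>t\<in>res u v ` S. le v t b" for b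
    proof -
      have G: "Gb F res le u v b \<in> DF F res le u" using Gb_DF[OF FL vu b] .
      define c where "c = \<alpha> u (Gb F res le u v b)"
      have cF: "c \<in> F u" using A1 G unfolding c_def by blast
      have iv: "inf u v = v" using vu by (simp add: inf_absorb2)
      have "le u s c" if s: "s \<in> S" for s
      proof -
        have "s \<in> Gb F res le u v b u" using s S bu res_id[OF b] iv by (auto simp: Gb_def)
        then have "le u s (res u u c)" unfolding c_def by (rule unit[OF G])
        then show ?thesis using res_id[OF cF] by simp
      qed
      then have "le u x c" using xl cF by blast
      then have "le v (res u v x) (res u v c)" using le_res[OF vu xF cF] by blast
      then show ?thesis using resGb[OF vu b] unfolding c_def by simp
    qed
    show ?thesis unfolding is_lub_in_def using res_in[OF vu xF] ub least by blast
  qed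
  have MEET: "is_glb_in (F v) (le v) (res u v ` S) (res u v x)"
    if vu: "v \<le> u" and S: "S \<subseteq> F u" and x: "is_glb_in (F u) (le u) S x" for u v S x
  proof -
    have G: "GS F res le u S \<in> DF F res le u" using GS_DF[OF S] .
    have "x = \<alpha> u (GS F res le u S)" using glb_unique[OF po x glbS[OF S]] .
    then have "res u v x = \<alpha> v (DRes u v (GS F res le u S))" using A2 G vu by blast
    also have "\<dots> = \<alpha> v (GS F res le v (res u v ` S))" using DRes_GS[OF vu S] by simp
    finally show ?thesis using glbS[of "res u v ` S" v] res_in[OF vu] S by auto
  qed
  show ?thesis
  proof (intro conjI allI impI)
    fix u show "complete_lattice_on (F u) (le u)" by (rule CL)
  next
    fix u v :: 'a assume "v \<le> u" then show "res u v ` F u = F v" by (rule SUR)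
  next
    fix u v S x assume "v \<le> u \<and> S \<subseteq> F u \<and> is_lub_in (F u) (le u) S x"
    then show "is_lub_in (F v) (le v) (res u v ` S) (res u v x)" using JOIN by blast
  next
    fix u v S x assume "v \<le> u \<and> S \<subseteq> F u \<and> is_glb_in (F u) (le u) S x"
    then show "is_glb_in (F v) (le v) (res u v ` S) (res u v x)" using MEET by blast
  qed
qed

lemma DF_res: assumes "G \<in> DF F res le u" "q \<le> p" "x \<in> G p" shows "res p q x \<in> G q"
proof -
  have "downsheaf F res le u G" using assms(1) unfolding DF_def by simp
  then have "sheaf G res" unfolding downsheaf_def by (elim conjE) assumption
  then have "presheaf G res" unfolding sheaf_def by (rule conjunct1)
  then have "\<forall>u v x. v \<le> u \<and> x \<in> G u \<longrightarrow> res u v x \<in> G v" unfolding presheaf_def by (rule conjunct1)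
  then show ?thesis using assms(2,3) by simp
qed

lemma imp_complete:
  assumes CL: "\<forall>u. complete_lattice_on (F u) (le u)"
    and SUR: "\<forall>u v. v \<le> u \<longrightarrow> res u v ` F u = F v"
    and JOIN: "\<forall>u v S x. v \<le> u \<and> S \<subseteq> F u \<and> is_lub_in (F u) (le u) S x \<longrightarrow>
                 is_lub_in (F v) (le v) (res u v ` S) (res u v x)"
    and MEET: "\<forall>u v S x. v \<le> u \<and> S \<subseteq> F u \<and> is_glb_in (F u) (le u) S x \<longrightarrow>
                 is_glb_in (F v) (le v) (res u v ` S) (res u v x)"
  shows "complete_posheaf F res le"
proof -
  have glb_ex: "\<exists>x. is_glb_in (F u) (le u) S x" if "S \<subseteq> F u" for u S
    using CL that unfolding complete_lattice_on_def by blast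
  have lub_ex: "\<exists>x. is_lub_in (F u) (le u) S x" if "S \<subseteq> F u" for u S
    using CL that unfolding complete_lattice_on_def by blast
  have sur: "\<exists>x\<in>F u. res u v x = b" if "v \<le> u" "b \<in> F v" for u v b
  proof -
    have "b \<in> res u v ` F u" using SUR that by blast
    then show ?thesis by blast
  qed
  define Y where "Y = (\<lambda>u G. {y \<in> F u. \<forall>w z. w \<le> u \<longrightarrow> z \<in> G w \<longrightarrow> le w z (res u w y)})"
  define \<alpha> where "\<alpha> = (\<lambda>u G. SOME c. is_glb_in (F u) (le u) (Y u G) c)"
  have aglb: "is_glb_in (F u) (le u) (Y u G) (\<alpha> u G)" for u G
  proof -
    have "Y u G \<subseteq> F u" unfolding Y_def by blast
    then have "\<exists>c. is_glb_in (F u) (le u) (Y u G) c" by (rule glb_ex)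
    then show ?thesis unfolding \<alpha>_def by (rule someI_ex)
  qed
  have aF: "\<alpha> u G \<in> F u" for u G using aglb unfolding is_glb_in_def by blast
  have aY: "\<alpha> u G \<in> Y u G" if Gs: "\<And>w. w \<le> u \<Longrightarrow> G w \<subseteq> F w" for u G
  proof -
    have "le w z (res u w (\<alpha> u G))" if wu: "w \<le> u" and z: "z \<in> G w" for w z
    proof -
      have YF: "Y u G \<subseteq> F u" unfolding Y_def by blast
      have g: "is_glb_in (F w) (le w) (res u w ` Y u G) (res u w (\<alpha> u G))"
        using MEET wu YF aglb by blast
      have zF: "z \<in> F w" using Gs wu z by blast
      have "\<forall>t\<in>res u w ` Y u G. le w z t" using wu z unfolding Y_def by blast
      then show ?thesis using g zF unfolding is_glb_in_def by blast
    qed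
    then show ?thesis using aF unfolding Y_def by blast
  qed
  have aleY: "le u (\<alpha> u G) y \<longleftrightarrow> y \<in> Y u G"
    if Gs: "\<And>w. w \<le> u \<Longrightarrow> G w \<subseteq> F w" and y: "y \<in> F u" for u G y
  proof
    assume "y \<in> Y u G" then show "le u (\<alpha> u G) y" using aglb unfolding is_glb_in_def by blast
  next
    assume le1: "le u (\<alpha> u G) y"
    have "le w z (res u w y)" if wu: "w \<le> u" and z: "z \<in> G w" for w z
    proof -
      have zF: "z \<in> F w" using Gs wu z by blast
      have 1: "le w z (res u w (\<alpha> u G))" using aY[OF Gs] wu z unfolding Y_def by blast
      have 2: "le w (res u w (\<alpha> u G)) (res u w y)" using le_res[OF wu aF y le1] .
      show ?thesis using le_trans[OF zF res_in[OF wu aF] res_in[OF wu y] 1 2] .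
    qed
    then show "y \<in> Y u G" using y unfolding Y_def by blast
  qed
  have GL: "\<exists>y0\<in>F u. res u v y0 = y' \<and> le w z (res u w y0)"
    if vu: "v \<le> u" and wu: "w \<le> u" and y': "y' \<in> F v" and z: "z \<in> F w"
      and zl: "le (inf v w) (res w (inf v w) z) (res v (inf v w) y')" for u v w y' z
  proof -
    define m where "m = inf v w"
    have mv: "m \<le> v" and mw: "m \<le> w" unfolding m_def by simp_all
    obtain a' where a': "a' \<in> F w" "res w m a' = res v m y'"
      using sur[OF mw res_in[OF mv y']] by blast
    obtain a where a: "is_lub_in (F w) (le w) {a', z} a" using lub_ex[of "{a', z}" w] a' z by blast
    have aF': "a \<in> F w" and za: "le w z a" using a unfolding is_lub_in_def by simp_all
    have j: "is_lub_in (F m) (le m) (res w m ` {a', z}) (res w m a)"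
      using JOIN a' z a mw by (simp del: image_insert image_empty)
    have ym: "res v m y' \<in> F m" using res_in[OF mv y'] .
    have "is_lub_in (F m) (le m) (res w m ` {a', z}) (res v m y')"
      using a'(2) ym le_refl[OF ym] zl unfolding is_lub_in_def m_def by auto
    then have am: "res w m a = res v m y'" using lub_unique[OF po j] by simp
    define s where "s = (\<lambda>p. if p = w then a else y')"
    have sF: "\<And>p. p \<in> {v, w} \<Longrightarrow> s p \<in> F p" unfolding s_def using aF' y' by auto
    have comp: "res p (inf p q) (s p) = res q (inf p q) (s q)" if "p \<in> {v, w}" "q \<in> {v, w}" for p q
      using that am unfolding s_def m_def by (auto simp: inf_commute)
    obtain x' where x': "x' \<in> F (Sup {v, w})" "\<forall>p\<in>{v, w}. res (Sup {v, w}) p x' = s p"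
      using glue[of "{v, w}" s] sF comp by blast
    have Sw: "Sup {v, w} = sup v w" by simp
    have svu: "sup v w \<le> u" using vu wu by simp
    have xv: "res (sup v w) v x' = y'"
    proof (cases "v = w")
      case True
      then have "a = y'" using am res_id[OF aF'] res_id[OF y'] unfolding m_def by simp
      then show ?thesis using x' True unfolding s_def by simp
    next
      case False then show ?thesis using x' unfolding s_def by simp
    qed
    have xw: "res (sup v w) w x' = a" using x' unfolding s_def by simp
    obtain y0 where y0: "y0 \<in> F u" "res u (sup v w) y0 = x'" using sur[OF svu] x' Sw by auto
    have "res u v y0 = y'" using res_comp[OF sup_ge1 svu y0(1)] y0(2) xv by simp
    moreover have "res u w y0 = a" using res_comp[OF sup_ge2 svu y0(1)] y0(2) xw by simp
    ultimately show ?thesis using y0 za by auto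
  qed
  show ?thesis unfolding complete_posheaf_def
  proof (rule exI[of _ \<alpha>], intro conjI allI impI)
    fix u G show "\<alpha> u G \<in> F u" by (rule aF)
  next
    fix u v G assume "v \<le> u \<and> G \<in> DF F res le u"
    then have vu: "v \<le> u" and G: "G \<in> DF F res le u" by blast+
    define D where "D = DRes u v G"
    have Gs: "\<And>w. w \<le> u \<Longrightarrow> G w \<subseteq> F w" using DF_sub[OF G] by blast
    have Ds: "\<And>w. w \<le> v \<Longrightarrow> D w \<subseteq> F w" using DF_sub[OF G] unfolding D_def DRes_def by auto
    have DG: "\<And>w. w \<le> v \<Longrightarrow> D w = G w" unfolding D_def DRes_def by simp
    define c where "c = \<alpha> u G"
    define d where "d = \<alpha> v D"
    have cF: "c \<in> F u" and dF: "d \<in> F v" unfolding c_def d_def by (rule aF)+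
    have rcF: "res u v c \<in> F v" using res_in[OF vu cF] .
    have cY: "c \<in> Y u G" unfolding c_def by (rule aY[OF Gs])
    have dY: "d \<in> Y v D" unfolding d_def by (rule aY[OF Ds])
    have "res u v c \<in> Y v D"
    proof -
      have "le w z (res v w (res u v c))" if wv: "w \<le> v" and z: "z \<in> D w" for w z
      proof -
        have "le w z (res u w c)" using cY wv vu z DG[OF wv] unfolding Y_def by auto
        then show ?thesis using res_comp[OF wv vu cF] by simp
      qed
      then show ?thesis using rcF unfolding Y_def by blast
    qed
    then have le1: "le v d (res u v c)" unfolding d_def using aleY[OF Ds rcF] by blast
    define P where "P = {p \<in> F u. le v (res u v p) d}"
    have PF: "P \<subseteq> F u" unfolding P_def by blast
    obtain l where l: "is_lub_in (F u) (le u) P l" using lub_ex[OF PF] by blast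
    have lF: "l \<in> F u" using l unfolding is_lub_in_def by blast
    have jl: "is_lub_in (F v) (le v) (res u v ` P) (res u v l)" using JOIN vu PF l by blast
    have ld: "le v (res u v l) d" using jl dF unfolding is_lub_in_def P_def by blast
    have lY: "l \<in> Y u G"
    proof -
      have "le w z (res u w l)" if wu: "w \<le> u" and z: "z \<in> G w" for w z
      proof -
        have zF: "z \<in> F w" using Gs wu z by blast
        have mv: "inf v w \<le> v" by simp
        have z': "res w (inf v w) z \<in> D (inf v w)" using DF_res[OF G inf_le2 z] DG[OF mv] by simp
        have zl: "le (inf v w) (res w (inf v w) z) (res v (inf v w) d)"
          using dY mv z' unfolding Y_def by blast
        obtain y0 where y0: "y0 \<in> F u" "res u v y0 = d" "le w z (res u w y0)"
          using GL[OF vu wu dF zF zl] by blast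
        have "y0 \<in> P" using y0 le_refl[OF dF] unfolding P_def by simp
        then have "le u y0 l" using l unfolding is_lub_in_def by blast
        then have "le w (res u w y0) (res u w l)" using le_res[OF wu y0(1) lF] by blast
        then show ?thesis using le_trans[OF zF res_in[OF wu y0(1)] res_in[OF wu lF] y0(3)] by blast
      qed
      then show ?thesis using lF unfolding Y_def by blast
    qed
    then have "le u c l" unfolding c_def using aleY[OF Gs lF] by blast
    then have "le v (res u v c) (res u v l)" using le_res[OF vu cF lF] by blast
    then have le2: "le v (res u v c) d" using le_trans[OF rcF res_in[OF vu lF] dF _ ld] by blast
    show "res u v (\<alpha> u G) = \<alpha> v (DRes u v G)"
      using le_antisym[OF rcF dF le2 le1] unfolding c_def d_def D_def .
  next
    fix u G H assume "G \<in> DF F res le u \<and> H \<in> DF F res le u \<and> DLe u G H"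
    then have GH: "\<And>w. G w \<subseteq> H w" unfolding DLe_def by blast
    have "Y u H \<subseteq> Y u G" using GH unfolding Y_def by blast
    then have "\<forall>y\<in>Y u H. le u (\<alpha> u G) y" using aglb[of u G] unfolding is_glb_in_def by blast
    then show "le u (\<alpha> u G) (\<alpha> u H)" using aglb[of u H] aF unfolding is_glb_in_def by blast
  next
    fix u G w y assume "G \<in> DF F res le u \<and> y \<in> F w"
    then have G: "G \<in> DF F res le u" and y: "y \<in> F w" by blast+
    have Gs: "\<And>p. p \<le> u \<Longrightarrow> G p \<subseteq> F p" using DF_sub[OF G] by blast
    show "pt_le res le (u, \<alpha> u G) (w, y) \<longleftrightarrow> pt_le DRes DLe (u, G) (w, down F res le w y)"
    proof (cases "u \<le> w")
      case False then show ?thesis by (simp add: pt_le_def)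
    next
      case uw: True
      have ryF: "res w u y \<in> F u" using res_in[OF uw y] .
      have "le u (\<alpha> u G) (res w u y) \<longleftrightarrow> res w u y \<in> Y u G" using aleY[OF Gs ryF] .
      also have "\<dots> \<longleftrightarrow> (\<forall>p z. p \<le> u \<longrightarrow> z \<in> G p \<longrightarrow> le p z (res w p y))"
      proof -
        have "\<And>p. p \<le> u \<Longrightarrow> res u p (res w u y) = res w p y" using res_comp[OF _ uw y] by blast
        then show ?thesis using ryF unfolding Y_def by auto
      qed
      also have "\<dots> \<longleftrightarrow> DLe u G (DRes w u (down F res le w y))"
      proof
        assume A: "\<forall>p z. p \<le> u \<longrightarrow> z \<in> G p \<longrightarrow> le p z (res w p y)"
        show "DLe u G (DRes w u (down F res le w y))" unfolding DLe_def
        proof (intro allI subsetI)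
          fix p z assume z: "z \<in> G p"
          then have pu: "p \<le> u" using DF_le[OF G] by blast
          then have pw: "p \<le> w" using uw by simp
          show "z \<in> DRes w u (down F res le w y) p"
            using A pu pw z Gs[OF pu] by (auto simp: DRes_def down_def)
        qed
      next
        assume B: "DLe u G (DRes w u (down F res le w y))"
        show "\<forall>p z. p \<le> u \<longrightarrow> z \<in> G p \<longrightarrow> le p z (res w p y)"
        proof (intro allI impI)
          fix p z assume pu: "p \<le> u" and z: "z \<in> G p"
          have pw: "p \<le> w" using pu uw by simp
          have "z \<in> DRes w u (down F res le w y) p" using B z unfolding DLe_def by blast
          then show "le p z (res w p y)" using pu pw by (simp add: DRes_def down_def)
        qed
      qed
      finally show ?thesis using uw by (simp add: pt_le_def)
    qed
  qed
qed

end

theorem corollary3p2: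
  fixes F :: "'a::complete_lattice \<Rightarrow> 'b set"
    and res :: "'a \<Rightarrow> 'a \<Rightarrow> 'b \<Rightarrow> 'b"
    and le :: "'a \<Rightarrow> 'b \<Rightarrow> 'b \<Rightarrow> bool"
  assumes "frame_law TYPE('a)"
    and "posheaf F res le"
  shows "complete_posheaf F res le \<longleftrightarrow>
    ((\<forall>u. complete_lattice_on (F u) (le u)) \<and>
     (\<forall>u v. v \<le> u \<longrightarrow> res u v ` F u = F v) \<and>
     (\<forall>u v S x. v \<le> u \<and> S \<subseteq> F u \<and> is_lub_in (F u) (le u) S x \<longrightarrow>
                 is_lub_in (F v) (le v) (res u v ` S) (res u v x)) \<and>
     (\<forall>u v S x. v \<le> u \<and> S \<subseteq> F u \<and> is_glb_in (F u) (le u) S x \<longrightarrow>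
                 is_glb_in (F v) (le v) (res u v ` S) (res u v x)))"
proof
  assume "complete_posheaf F res le"
  then show "(\<forall>u. complete_lattice_on (F u) (le u)) \<and>
     (\<forall>u v. v \<le> u \<longrightarrow> res u v ` F u = F v) \<and>
     (\<forall>u v S x. v \<le> u \<and> S \<subseteq> F u \<and> is_lub_in (F u) (le u) S x \<longrightarrow>
                 is_lub_in (F v) (le v) (res u v ` S) (res u v x)) \<and>
     (\<forall>u v S x. v \<le> u \<and> S \<subseteq> F u \<and> is_glb_in (F u) (le u) S x \<longrightarrow>
                 is_glb_in (F v) (le v) (res u v ` S) (res u v x))"
    by (rule complete_imp[OF assms(2) assms(1)])
next
  assume R: "(\<forall>u. complete_lattice_on (F u) (le u)) \<and>
     (\<forall>u v. v \<le> u \<longrightarrow> res u v ` F u = F v) \<and>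
     (\<forall>u v S x. v \<le> u \<and> S \<subseteq> F u \<and> is_lub_in (F u) (le u) S x \<longrightarrow>
                 is_lub_in (F v) (le v) (res u v ` S) (res u v x)) \<and>
     (\<forall>u v S x. v \<le> u \<and> S \<subseteq> F u \<and> is_glb_in (F u) (le u) S x \<longrightarrow>
                 is_glb_in (F v) (le v) (res u v ` S) (res u v x))"
  show "complete_posheaf F res le"
    using R by (elim conjE) (rule imp_complete[OF assms(2)])
qed

end
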